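(* Let $0\le\ell\le r$. Among all ideals $[I_0,\dots,I_\ell]$ of $\Omega_{H_\ell}$ with $I_0=p\mathbb{Z}$, the only prime ideal is $$\mathcal L^\ell(p)=[(p),J_{1,0}(p),\dots,J_{\ell,0}(p)].$$
   Context: Fix a prime $p$ and an integer $r\ge0$. For $0\le k\le r$ let $R_k$ be the commutative ring which is free as a $\mathbb{Z}$-module with basis $X_{k,0},\dots,X_{k,k}$ and multiplication $X_{k,i}X_{k,j}=p^{k-\max(i,j)}X_{k,\min(i,j)}$; thus $X_{k,k}=1$, and an integer $n$ is identified with $nX_{k,k}$. For $0\le k\le\ell\le r$ define: the additive map $\mathrm{ind}^\ell_k:R_k\to R_\ell$, $X_{k,i}\mapsto X_{\ell,i}$; the ring homomorphism $\mathrm{res}^\ell_k:R_\ell\to R_k$, $\mathrm{res}^\ell_k(X_{\ell,i})=p^{\ell-k}X_{k,i}$ if $i\le k$ and $=p^{\ell-i}$ if $i\ge k$; and the multiplicative map $\mathrm{jnd}^\ell_k:R_k\to R_\ell$, $$\mathrm{jnd}^\ell_k\Big(\sum_{i=0}^k m_iX_{k,i}\Big)=m_kX_{\ell,\ell}+\sum_{k\le i<\ell}\frac{m_k^{p^{\ell-i}}-m_k^{p^{\ell-i-1}}}{p^{\ell-i}}X_{\ell,i}+\sum_{0\le i<k}\frac{(\sum_{s=i}^k m_sp^{k-s})^{p^{\ell-k}}-(\sum_{s=i+1}^k m_sp^{k-s})^{p^{\ell-k}}}{p^{\ell-i}}X_{\ell,i}$$ ($m_i\in\mathbb{Z}$).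 For $k=\ell$ these maps are the identity. These data form the Burnside Tambara functor on $\mathbb{Z}/p^r\mathbb{Z}$; keeping indices $\le n$ gives $\Omega_{H_n}$. An ideal of $\Omega_{H_n}$ is a sequence $[I_0,\dots,I_n]$ of ideals $I_k\subseteq R_k$ such that for every $1\le k\le n$: $\mathrm{ind}^k_{k-1}(I_{k-1})\subseteq I_k$, $\mathrm{res}^k_{k-1}(I_k)\subseteq I_{k-1}$, $\mathrm{jnd}^k_{k-1}(I_{k-1})\subseteq I_k$. It is proper if $I_0\ne R_0$. A proper ideal is prime if for all $0\le\ell'\le k\le n$, $a\in R_k$, $b\in R_{\ell'}$: whenever $(\mathrm{jnd}^m_i\mathrm{res}^k_i(a))\cdot(\mathrm{jnd}^m_j\mathrm{res}^{\ell'}_j(b))\in I_m$ for all $0\le i\le k$, $0\le j\le\ell'$, $m=\max(i,j)$, then $a\in I_k$ or $b\in I_{\ell'}$. For an ideal $I\subseteq R_{k-1}$, $L(I)=(\mathrm{res}^k_{k-1})^{-1}(I)\subseteq R_k$; for $\mathscr I=[I_0,\dots,I_{k-1}]$, $\mathcal L\mathscr I=[I_0,\dots,I_{k-1},L(I_{k-1})]$, $\mathcal L^n$ its iterate, $(p)=[p\mathbb{Z}]$. For $0\le j\le i$, $F_{i,j}=X_{i,j}-p^{i-j}$; for $i\ge1$, $J_{i,0}(x)\subseteq R_i$ is the ideal generated by $x,F_{i,0},\dots,F_{i,i-1}$. *)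

theory Defs
  imports "HOL-Computational_Algebra.Primes"
begin

text \<open>Elements of R_k are coefficient vectors m :: nat => int with m i the
coefficient of X_{k,i}; they must vanish above k.\<close>

definition carr :: "nat \<Rightarrow> (nat \<Rightarrow> int) set" where
  "carr k = {m. \<forall>i>k. m i = 0}"

text \<open>The integer n viewed in R_k, i.e. n X_{k,k}.\<close>
definition cst :: "nat \<Rightarrow> int \<Rightarrow> (nat \<Rightarrow> int)" where
  "cst k n = (\<lambda>i. if i = k then n else 0)"

definition bX :: "nat \<Rightarrow> (nat \<Rightarrow> int)" where
  "bX i = (\<lambda>t. if t = i then 1 else 0)"

text \<open>Multiplication in R_k: X_{k,i} X_{k,j} = p^(k - max i j) X_{k, min i j}.\<close>
definition mult :: "nat \<Rightarrow> nat \<Rightarrow> (nat \<Rightarrow> int) \<Rightarrow> (nat \<Rightarrow> int) \<Rightarrow> (nat \<Rightarrow> int)" where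
  "mult p k a b = (\<lambda>t. if t \<le> k then
      (\<Sum>i\<le>k. \<Sum>j\<le>k. if min i j = t then a i * b j * int p ^ (k - max i j) else 0)
    else 0)"

definition ind :: "nat \<Rightarrow> nat \<Rightarrow> (nat \<Rightarrow> int) \<Rightarrow> (nat \<Rightarrow> int)" where
  "ind l k a = a"  \<comment> \<open>ind^l_k : X_{k,i} |-> X_{l,i}\<close>

definition res :: "nat \<Rightarrow> nat \<Rightarrow> nat \<Rightarrow> (nat \<Rightarrow> int) \<Rightarrow> (nat \<Rightarrow> int)" where
  "res p l k a = (\<lambda>j. if j < k then int p ^ (l - k) * a j
      else if j = k then int p ^ (l - k) * a k + (\<Sum>i\<in>{k<..l}. int p ^ (l - i) * a i)
      else 0)"

definition jnd :: "nat \<Rightarrow> nat \<Rightarrow> nat \<Rightarrow> (nat \<Rightarrow> int) \<Rightarrow> (nat \<Rightarrow> int)" where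
  "jnd p l k m = (\<lambda>i.
      if i = l then m k
      else if k \<le> i \<and> i < l then
        (m k ^ (p ^ (l - i)) - m k ^ (p ^ (l - i - 1))) div (int p ^ (l - i))
      else if i < k then
        ((\<Sum>s\<in>{i..k}. m s * int p ^ (k - s)) ^ (p ^ (l - k))
          - (\<Sum>s\<in>{i+1..k}. m s * int p ^ (k - s)) ^ (p ^ (l - k))) div (int p ^ (l - i))
      else 0)"

definition ring_ideal :: "nat \<Rightarrow> nat \<Rightarrow> (nat \<Rightarrow> int) set \<Rightarrow> bool" where
  "ring_ideal p k J \<longleftrightarrow> J \<subseteq> carr k \<and> (\<lambda>_. 0) \<in> J \<and> (\<forall>x\<in>J. \<forall>y\<in>J. (\<lambda>t. x t + y t) \<in> J)
     \<and> (\<forall>a\<in>carr k. \<forall>x\<in>J. mult p k a x \<in> J)"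

definition gen_ideal :: "nat \<Rightarrow> nat \<Rightarrow> (nat \<Rightarrow> int) set \<Rightarrow> (nat \<Rightarrow> int) set" where
  "gen_ideal p k S = \<Inter>{J. ring_ideal p k J \<and> S \<subseteq> J}"

definition omega_ideal :: "nat \<Rightarrow> nat \<Rightarrow> (nat \<Rightarrow> (nat \<Rightarrow> int) set) \<Rightarrow> bool" where
  "omega_ideal p n I \<longleftrightarrow> (\<forall>k\<le>n. ring_ideal p k (I k)) \<and>
     (\<forall>k. 1 \<le> k \<and> k \<le> n \<longrightarrow>
        ind k (k-1) ` I (k-1) \<subseteq> I k \<and> res p k (k-1) ` I k \<subseteq> I (k-1)
        \<and> jnd p k (k-1) ` I (k-1) \<subseteq> I k)"

definition omega_prime :: "nat \<Rightarrow> nat \<Rightarrow> (nat \<Rightarrow> (nat \<Rightarrow> int) set) \<Rightarrow> bool" where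
  "omega_prime p n I \<longleftrightarrow> I 0 \<noteq> carr 0 \<and>
     (\<forall>k l' a b. l' \<le> k \<and> k \<le> n \<and> a \<in> carr k \<and> b \<in> carr l' \<and>
        (\<forall>i\<le>k. \<forall>j\<le>l'. mult p (max i j) (jnd p (max i j) i (res p k i a))
                                         (jnd p (max i j) j (res p l' j b)) \<in> I (max i j))
        \<longrightarrow> a \<in> I k \<or> b \<in> I l')"

definition pZ :: "nat \<Rightarrow> (nat \<Rightarrow> int) set" where
  "pZ p = {m \<in> carr 0. int p dvd m 0}"

definition Lop :: "nat \<Rightarrow> nat \<Rightarrow> (nat \<Rightarrow> int) set \<Rightarrow> (nat \<Rightarrow> int) set" where
  "Lop p k J = {a \<in> carr k. res p k (k-1) a \<in> J}"

text \<open>Lseq p k is the k-th component of L^n (p) (for any n >= k).\<close>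
fun Lseq :: "nat \<Rightarrow> nat \<Rightarrow> (nat \<Rightarrow> int) set" where
  "Lseq p 0 = pZ p"
| "Lseq p (Suc k) = Lop p (Suc k) (Lseq p k)"

definition Fij :: "nat \<Rightarrow> nat \<Rightarrow> nat \<Rightarrow> (nat \<Rightarrow> int)" where
  "Fij p i j = (\<lambda>t. bX j t - cst i (int p ^ (i - j)) t)"

definition J0 :: "nat \<Rightarrow> nat \<Rightarrow> int \<Rightarrow> (nat \<Rightarrow> int) set" where
  "J0 p i x = gen_ideal p i ({cst i x} \<union> {Fij p i j | j. j < i})"

end

theory Submission
  imports Defs
begin

lemma mult_top: "mult p k a b k = a k * b k"
proof -
  have "\<And>i. i \<le> k \<Longrightarrow> (\<Sum>j\<le>k. if min i j = k then a i * b j * int p ^ (k - max i j) else 0)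
     = (if i = k then a k * b k else 0)"
  proof -
    fix i assume i: "i \<le> k"
    show "?thesis i"
    proof (cases "i = k")
      case True
      have "(\<Sum>j\<le>k. if min i j = k then a i * b j * int p ^ (k - max i j) else 0)
          = (\<Sum>j\<le>k. if j = k then a k * b k else 0)"
        by (rule sum.cong) (use True in \<open>auto simp: min_def max_def\<close>)
      then show ?thesis using True by simp
    next
      case False
      then show ?thesis using i by (intro trans[OF sum.neutral]) (auto simp: min_def)
    qed
  qed
  then have "(\<Sum>i\<le>k. \<Sum>j\<le>k. if min i j = k then a i * b j * int p ^ (k - max i j) else 0)
     = (\<Sum>i\<le>k. if i = k then a k * b k else 0)"
    by (intro sum.cong) auto
  also have "\<dots> = a k * b k" by simp
  finally show ?thesis unfolding mult_def by simp
qed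

lemma mult_carr: "mult p k a b \<in> carr k"
  unfolding mult_def carr_def by simp

lemma mult_comm: "mult p k a b = mult p k b a"
proof (rule ext)
  fix t
  have "(\<Sum>i\<le>k. \<Sum>j\<le>k. if min i j = t then b i * a j * int p ^ (k - max i j) else 0)
      = (\<Sum>j\<le>k. \<Sum>i\<le>k. if min i j = t then b i * a j * int p ^ (k - max i j) else 0)"
    by (rule sum.swap)
  also have "\<dots> = (\<Sum>j\<le>k. \<Sum>i\<le>k. if min j i = t then a j * b i * int p ^ (k - max j i) else 0)"
  proof (intro sum.cong refl)
    fix i j
    show "(if min i j = t then b i * a j * int p ^ (k - max i j) else 0)
        = (if min j i = t then a j * b i * int p ^ (k - max j i) else 0)"
      by (simp only: min.commute[of i j] max.commute[of i j] mult.commute[of "b i" "a j"])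
  qed
  finally show "mult p k a b t = mult p k b a t" unfolding mult_def by simp
qed

lemma mult_cst: "mult p k (cst k c) x = (\<lambda>t. if t \<le> k then c * x t else 0)"
proof (rule ext)
  fix t
  show "mult p k (cst k c) x t = (if t \<le> k then c * x t else 0)"
  proof (cases "t \<le> k")
    case True
    have "\<And>i. i \<le> k \<Longrightarrow> (\<Sum>j\<le>k. if min i j = t then cst k c i * x j * int p ^ (k - max i j) else 0)
       = (if i = k then c * x t else 0)"
    proof -
      fix i assume i: "i \<le> k"
      show "?thesis i"
      proof (cases "i = k")
        case True
        have "(\<Sum>j\<le>k. if min i j = t then cst k c i * x j * int p ^ (k - max i j) else 0)
          = (\<Sum>j\<le>k. if j = t then c * x t else 0)"
          by (rule sum.cong) (use True in \<open>auto simp: min_def max_def cst_def\<close>)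
        then show ?thesis using True \<open>t \<le> k\<close> by simp
      next
        case False
        then show ?thesis by (intro trans[OF sum.neutral]) (auto simp: cst_def)
      qed
    qed
    then have "(\<Sum>i\<le>k. \<Sum>j\<le>k. if min i j = t then cst k c i * x j * int p ^ (k - max i j) else 0)
       = (\<Sum>i\<le>k. if i = k then c * x t else 0)"
      by (intro sum.cong) auto
    also have "\<dots> = c * x t" by simp
    finally show ?thesis unfolding mult_def using True by simp
  qed (simp add: mult_def)
qed

lemma cst_carr: "cst k c \<in> carr k" unfolding cst_def carr_def by simp

lemma jnd_carr: "k \<le> l \<Longrightarrow> jnd p l k m \<in> carr l" unfolding jnd_def carr_def by auto
lemma jnd_top: "jnd p l k m l = m k" unfolding jnd_def by simp

lemma jnd_same: "jnd p m m (cst m c) = cst m c"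
proof (rule ext)
  fix i
  show "jnd p m m (cst m c) i = cst m c i"
  proof (cases "i < m")
    case True
    have "(\<Sum>s\<in>{i..m}. cst m c s * int p ^ (m - s)) = (\<Sum>s\<in>{i..m}. if s = m then c else 0)"
      by (rule sum.cong) (auto simp: cst_def)
    also have "\<dots> = c" using True by simp
    moreover have "(\<Sum>s\<in>{i+1..m}. cst m c s * int p ^ (m - s)) = (\<Sum>s\<in>{i+1..m}. if s = m then c else 0)"
      by (rule sum.cong) (auto simp: cst_def)
    moreover have "(\<Sum>s\<in>{i+1..m}. if s = m then c else 0) = c" using True by simp
    ultimately show ?thesis using True by (simp add: jnd_def cst_def)
  qed (auto simp: jnd_def cst_def)
qed

lemma res_cst: assumes "i \<le> k" shows "res p k i (cst k c) = cst i c"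
proof (rule ext)
  fix j
  show "res p k i (cst k c) j = cst i c j"
  proof (cases "j = i")
    case True
    show ?thesis
    proof (cases "i = k")
      case True then show ?thesis using \<open>j = i\<close> by (simp add: res_def cst_def)
    next
      case False
      have "(\<Sum>s\<in>{i<..k}. int p ^ (k - s) * cst k c s) = (\<Sum>s\<in>{i<..k}. if s = k then c else 0)"
        by (rule sum.cong) (auto simp: cst_def)
      also have "\<dots> = c" using False assms by simp
      finally show ?thesis using \<open>j = i\<close> False by (simp add: res_def cst_def)
    qed
  qed (use assms in \<open>auto simp: res_def cst_def\<close>)
qed

lemma res_carr: "res p l k a \<in> carr k" unfolding res_def carr_def by auto

lemma res_Suc: "res p (Suc n) n a n = int p * a n + a (Suc n)"
proof -
  have "{n<..Suc n} = {Suc n}" by auto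
  then show ?thesis by (simp add: res_def)
qed


definition S :: "nat \<Rightarrow> nat \<Rightarrow> (nat \<Rightarrow> int) set" where
  "S p k = {a \<in> carr k. int p dvd a k}"

lemma Lseq_char: "Lseq p k = S p k"
proof (induction k)
  case 0 then show ?case by (simp add: S_def pZ_def)
next
  case (Suc k)
  show ?case
  proof (rule set_eqI)
    fix a
    have "(int p dvd int p * a k + a (Suc k)) = (int p dvd a (Suc k))"
      by (simp add: dvd_add_right_iff)
    then show "a \<in> Lseq p (Suc k) \<longleftrightarrow> a \<in> S p (Suc k)"
      using Suc res_carr[of p "Suc k" k a] by (simp add: Lop_def S_def res_Suc)
  qed
qed

lemma S_ideal: "ring_ideal p k (S p k)"
  using mult_carr[of p k] unfolding ring_ideal_def S_def
  by (auto simp: mult_top carr_def)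

lemma smul_in: assumes "ring_ideal p k J" "y \<in> J" shows "(\<lambda>t. c * y t) \<in> J"
proof -
  have y: "y \<in> carr k" using assms unfolding ring_ideal_def by auto
  have "mult p k (cst k c) y \<in> J" using assms cst_carr unfolding ring_ideal_def by blast
  moreover have "mult p k (cst k c) y = (\<lambda>t. c * y t)"
    using y by (auto simp: mult_cst carr_def)
  ultimately show ?thesis by simp
qed

lemma add_in: "ring_ideal p k J \<Longrightarrow> x \<in> J \<Longrightarrow> y \<in> J \<Longrightarrow> (\<lambda>t. x t + y t) \<in> J"
  unfolding ring_ideal_def by blast

lemma part1: "omega_ideal p l (Lseq p)"
  unfolding omega_ideal_def Lseq_char
proof (intro conjI allI impI)
  fix k assume "k \<le> l" show "ring_ideal p k (S p k)" by (rule S_ideal)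
next
  fix k assume k: "1 \<le> k \<and> k \<le> l"
  then obtain n where n: "k = Suc n" by (cases k) auto
  show "ind k (k - 1) ` S p (k - 1) \<subseteq> S p k"
    using n by (auto simp: ind_def S_def carr_def)
  show "res p k (k - 1) ` S p k \<subseteq> S p (k - 1)"
    using n by (auto simp: S_def res_carr res_Suc)
  show "jnd p k (k - 1) ` S p (k - 1) \<subseteq> S p k"
    using n by (auto simp: S_def jnd_carr jnd_top)
qed

lemma phi_dvd: "int p dvd res p k 0 a 0 \<longleftrightarrow> int p dvd a k"
proof (cases k)
  case 0 then show ?thesis by (simp add: res_def)
next
  case (Suc n)
  have "res p k 0 a 0 = int p ^ k * a 0 + (\<Sum>i\<in>{0<..<k}. int p ^ (k - i) * a i) + a k"
  proof -
    have "{0<..k} = insert k {0<..<k}" using Suc by auto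
    then show ?thesis by (simp add: res_def)
  qed
  moreover have X: "int p dvd int p ^ k * a 0 + (\<Sum>i\<in>{0<..<k}. int p ^ (k - i) * a i)"
    using Suc by (intro dvd_add dvd_sum dvd_mult2) (auto intro!: dvd_power)
  ultimately show ?thesis using dvd_add_right_iff[OF X, of "a k"] by simp
qed

lemma part2: assumes "prime p" shows "omega_prime p l (Lseq p)"
  unfolding omega_prime_def
proof (intro conjI allI impI)
  show "Lseq p 0 \<noteq> carr 0"
  proof
    assume "Lseq p 0 = carr 0"
    then have "cst 0 1 \<in> Lseq p 0" using cst_carr by simp
    then show False using assms by (simp add: Lseq_char S_def cst_def)
  qed
next
  fix k l' a b
  assume h: "l' \<le> k \<and> k \<le> l \<and> a \<in> carr k \<and> b \<in> carr l' \<and>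
        (\<forall>i\<le>k. \<forall>j\<le>l'. mult p (max i j) (jnd p (max i j) i (res p k i a))
                                         (jnd p (max i j) j (res p l' j b)) \<in> Lseq p (max i j))"
  then have "mult p 0 (jnd p 0 0 (res p k 0 a)) (jnd p 0 0 (res p l' 0 b)) \<in> Lseq p 0"
    by (metis le0 max.idem)
  then have "int p dvd res p k 0 a 0 * res p l' 0 b 0"
    by (simp add: Lseq_char S_def mult_top jnd_top)
  moreover have "prime (int p)" using assms by simp
  ultimately have "int p dvd res p k 0 a 0 \<or> int p dvd res p l' 0 b 0"
    by (simp add: prime_dvd_mult_iff)
  then show "a \<in> Lseq p k \<or> b \<in> Lseq p l'"
    using h by (auto simp: Lseq_char S_def phi_dvd)
qed


lemma Fij_carr: "j < k \<Longrightarrow> Fij p k j \<in> carr k"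
  unfolding Fij_def carr_def bX_def cst_def by auto

lemma part3: assumes "1 \<le> k" shows "Lseq p k = J0 p k (int p)"
proof -
  let ?G = "{cst k (int p)} \<union> {Fij p k j | j. j < k}"
  have GS: "?G \<subseteq> S p k"
  proof -
    have "Fij p k j \<in> S p k" if "j < k" for j
    proof -
      have "Fij p k j k = - (int p ^ (k - j))" using that by (simp add: Fij_def bX_def cst_def)
      moreover have "int p dvd int p ^ (k - j)" using that by (simp add: dvd_power)
      ultimately show ?thesis using Fij_carr[OF that] by (simp add: S_def)
    qed
    then show ?thesis using cst_carr by (auto simp: S_def cst_def)
  qed
  have "J0 p k (int p) \<subseteq> S p k"
    unfolding J0_def gen_ideal_def using S_ideal GS by blast
  moreover have "S p k \<subseteq> J0 p k (int p)"
  proof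
    fix a assume a: "a \<in> S p k"
    show "a \<in> J0 p k (int p)"
      unfolding J0_def gen_ideal_def
    proof (rule InterI, clarify)
      fix J assume J: "ring_ideal p k J" "?G \<subseteq> J"
      have sumin: "n \<le> k \<longrightarrow> (\<lambda>t. \<Sum>j<n. a j * Fij p k j t) \<in> J" for n
      proof (induction n)
        case 0
        have "(\<lambda>t. \<Sum>j<(0::nat). a j * Fij p k j t) = (\<lambda>_. 0)" by simp
        then show ?case using J(1) unfolding ring_ideal_def by simp
      next
        case (Suc n)
        show ?case
        proof
          assume n: "Suc n \<le> k"
          have IH: "(\<lambda>t. \<Sum>j<n. a j * Fij p k j t) \<in> J" using Suc n by simp
           have nk: "n < k" using n by simp
          have F: "Fij p k n \<in> J" using J(2) nk by blast
          have "(\<lambda>t. a n * Fij p k n t) \<in> J"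
            using J(1) F by (rule smul_in)
          then have "(\<lambda>t. (\<Sum>j<n. a j * Fij p k j t) + a n * Fij p k n t) \<in> J"
            by (rule add_in[OF J(1) IH])
          then show "(\<lambda>t. \<Sum>j<Suc n. a j * Fij p k j t) \<in> J" by simp
        qed
      qed
      have "int p dvd a k + (\<Sum>j<k. a j * int p ^ (k - j))"
        using a by (intro dvd_add dvd_sum) (auto simp: S_def intro!: dvd_mult dvd_power)
      then obtain d where d: "a k + (\<Sum>j<k. a j * int p ^ (k - j)) = int p * d" by blast
      have dp: "(\<lambda>t. d * cst k (int p) t) \<in> J" using J by (intro smul_in) auto
      have eq: "a = (\<lambda>t. (\<Sum>j<k. a j * Fij p k j t) + d * cst k (int p) t)"
      proof (rule ext)
        fix t
        consider "t < k" | "t = k" | "t > k" by linarith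
        then show "a t = (\<Sum>j<k. a j * Fij p k j t) + d * cst k (int p) t"
        proof cases
          case 1
          have "(\<Sum>j<k. a j * Fij p k j t) = (\<Sum>j<k. if j = t then a t else 0)"
            using 1 by (intro sum.cong) (auto simp: Fij_def bX_def cst_def)
          then show ?thesis using 1 by (simp add: cst_def)
        next
          case 2
          have "(\<Sum>j<k. a j * Fij p k j t) = - (\<Sum>j<k. a j * int p ^ (k - j))"
            using 2 by (simp add: Fij_def bX_def cst_def sum_negf[symmetric])
          then show ?thesis using 2 d by (simp add: cst_def algebra_simps)
        next
          case 3
          have "(\<Sum>j<k. a j * Fij p k j t) = 0"
            using 3 by (intro sum.neutral) (auto simp: Fij_def bX_def cst_def)
          then show ?thesis using 3 a by (simp add: cst_def S_def carr_def)
        qed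
      qed
      show "a \<in> J" using add_in[OF J(1) sumin[of k, simplified] dp] eq by simp
    qed
  qed
  ultimately show ?thesis by (simp add: Lseq_char)
qed


lemma gn: assumes "prime p" shows "int p dvd jnd p (Suc n) n (cst n (int p)) n + 1"
proof -
  have p1: "p \<ge> 1" using assms prime_ge_1_nat by blast
  have p2': "p \<ge> 2" using assms by (rule prime_ge_2_nat)
  then have p2: "p - 1 \<ge> 1" by arith
  let ?q = "int p ^ (p - 1)"
  have ps: "p = Suc (p - 1)" using p1 by arith
  have pp: "int p ^ p = int p * ?q" by (subst ps) (simp only: power_Suc diff_Suc_1)
  have "jnd p (Suc n) n (cst n (int p)) n = (int p ^ p - int p) div int p"
    by (simp add: jnd_def cst_def)
  also have "\<dots> = (int p * (?q - 1)) div int p" by (simp add: pp algebra_simps)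
  also have "\<dots> = ?q - 1" using p1 by simp
  finally have "jnd p (Suc n) n (cst n (int p)) n + 1 = ?q" by simp
  moreover have "int p dvd ?q" using p2 by (intro dvd_power) auto
  ultimately show ?thesis by simp
qed

lemma decomp:
  assumes pr: "prime p" and J: "ring_ideal p (Suc n) J"
    and ind: "\<And>u. u \<in> carr n \<Longrightarrow> int p dvd u n \<Longrightarrow> u \<in> J"
    and g: "jnd p (Suc n) n (cst n (int p)) \<in> J"
    and x: "x \<in> carr (Suc n)" "int p dvd x (Suc n)" "int p dvd x n + x (Suc n) div int p"
  shows "x \<in> J"
proof -
  define G where "G = jnd p (Suc n) n (cst n (int p))"
  define c where "c = x (Suc n) div int p"
  have xc: "x (Suc n) = c * int p" using x(2) unfolding c_def by simp
  have Gtop: "G (Suc n) = int p" unfolding G_def by (simp add: jnd_top cst_def)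
  have Gc: "G \<in> carr (Suc n)" unfolding G_def by (rule jnd_carr) simp
  obtain e where e: "G n + 1 = int p * e" using gn[OF pr, of n] unfolding G_def by blast
  define v where "v = (\<lambda>t. c * G t)"
  have v: "v \<in> J" unfolding v_def using J g[folded G_def] by (rule smul_in)
  define u where "u = (\<lambda>t. x t - v t)"
  have uc: "u \<in> carr n"
    unfolding carr_def mem_Collect_eq
  proof (intro allI impI)
    fix t assume "t > n"
    then consider "t = Suc n" | "t > Suc n" by linarith
    then show "u t = 0"
    proof cases
      case 1 then show ?thesis by (simp add: u_def v_def xc Gtop)
    next
      case 2 then show ?thesis using x(1) Gc by (simp add: u_def v_def carr_def)
    qed
  qed
  have "u n = (x n + c) - c * (G n + 1)" by (simp add: u_def v_def algebra_simps)
  moreover have "int p dvd x n + c" using x(3) unfolding c_def .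
  ultimately have "int p dvd u n" using e by simp
  then have "u \<in> J" using ind uc by blast
  moreover have "x = (\<lambda>t. u t + v t)" by (simp add: u_def)
  ultimately show ?thesis using add_in[OF J _ v] by simp
qed

lemma prod_form:
  "mult p (max i j) (jnd p (max i j) i (cst i c)) (jnd p (max i j) j (cst j c))
     = (\<lambda>t. if t \<le> max i j then c * jnd p (max i j) (min i j) (cst (min i j) c) t else 0)"
proof (cases "i \<le> j")
  case True
  have mx: "max i j = j" and mn: "min i j = i" using True by auto
  show ?thesis unfolding mx mn by (simp add: jnd_same mult_comm[of p j _ "cst j c"] mult_cst)
next
  case False
  have mx: "max i j = i" and mn: "min i j = j" using False by auto
  show ?thesis unfolding mx mn by (simp add: jnd_same mult_cst)
qed

lemma part4:
  assumes pr: "prime p" and I: "omega_ideal p l I" "I 0 = pZ p" "omega_prime p l I"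
  shows "\<forall>k\<le>l. I k = S p k"
proof -
  have "k \<le> l \<Longrightarrow> \<forall>m\<le>k. I m = S p m" for k
  proof (induction k)
    case 0 then show ?case using I(2) Lseq_char[of p 0] by simp
  next
    case (Suc n)
    then have IH: "\<forall>m\<le>n. I m = S p m" by simp
    have In: "I n = S p n" using IH by simp
    have Ji: "ring_ideal p (Suc n) (I (Suc n))" using I(1) Suc.prems unfolding omega_ideal_def by blast
    have C: "ind (Suc n) n ` I n \<subseteq> I (Suc n) \<and> res p (Suc n) n ` I (Suc n) \<subseteq> I n
        \<and> jnd p (Suc n) n ` I n \<subseteq> I (Suc n)"
    proof -
      have "\<forall>k. 1 \<le> k \<and> k \<le> l \<longrightarrow>
        ind k (k-1) ` I (k-1) \<subseteq> I k \<and> res p k (k-1) ` I k \<subseteq> I (k-1)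
        \<and> jnd p k (k-1) ` I (k-1) \<subseteq> I k" using I(1) unfolding omega_ideal_def by (rule conjunct2)
      from this[rule_format, of "Suc n"] Suc.prems show ?thesis by simp
    qed
    have sub: "I (Suc n) \<subseteq> S p (Suc n)"
    proof
      fix a assume a: "a \<in> I (Suc n)"
      then have "res p (Suc n) n a \<in> S p n" using C In by blast
      then have "int p dvd int p * a n + a (Suc n)" by (simp add: S_def res_Suc)
      then have "int p dvd a (Suc n)" by (simp add: dvd_add_right_iff)
      moreover have "a \<in> carr (Suc n)" using a Ji unfolding ring_ideal_def by blast
      ultimately show "a \<in> S p (Suc n)" by (simp add: S_def)
    qed
    have ind: "u \<in> I (Suc n)" if "u \<in> carr n" "int p dvd u n" for u
    proof -
      have "u \<in> I n" using that In by (simp add: S_def)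
      then show ?thesis using C by (force simp: ind_def)
    qed
    have g: "jnd p (Suc n) n (cst n (int p)) \<in> I (Suc n)"
    proof -
      have "cst n (int p) \<in> I n" using In cst_carr by (simp add: S_def cst_def)
      then show ?thesis using C by blast
    qed
    note D = decomp[OF pr Ji ind g]
    have cp: "cst (Suc n) (int p) \<in> I (Suc n)"
    proof -
      have H: "\<forall>i\<le>Suc n. \<forall>j\<le>Suc n. mult p (max i j) (jnd p (max i j) i (res p (Suc n) i (cst (Suc n) (int p))))
             (jnd p (max i j) j (res p (Suc n) j (cst (Suc n) (int p)))) \<in> I (max i j)"
      proof (intro allI impI)
        fix i j assume ij: "i \<le> Suc n" "j \<le> Suc n"
        define m where "m = max i j"
        define N where "N = jnd p m (min i j) (cst (min i j) (int p))"
        have Nc: "N \<in> carr m" unfolding N_def m_def by (rule jnd_carr) simp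
        have Nt: "N m = int p" unfolding N_def by (simp add: jnd_top cst_def)
        define x where "x = (\<lambda>t. if t \<le> m then int p * N t else 0)"
        have eqx: "mult p (max i j) (jnd p (max i j) i (res p (Suc n) i (cst (Suc n) (int p))))
             (jnd p (max i j) j (res p (Suc n) j (cst (Suc n) (int p)))) = x"
        proof -
          have r1: "res p (Suc n) i (cst (Suc n) (int p)) = cst i (int p)" using ij(1) by (rule res_cst)
          have r2: "res p (Suc n) j (cst (Suc n) (int p)) = cst j (int p)" using ij(2) by (rule res_cst)
          show ?thesis unfolding r1 r2 x_def N_def m_def by (rule prod_form)
        qed
        have xc: "x \<in> carr m" by (simp add: x_def carr_def)
        have "x \<in> I m"
        proof (cases "m \<le> n")
          case True
          then show ?thesis using IH xc Nt by (simp add: S_def x_def)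
        next
          case False
          then have mS: "m = Suc n" using ij unfolding m_def by (auto simp: max_def)
          have "x (Suc n) = int p * int p" using Nt mS by (simp add: x_def)
          moreover have "x n = int p * N n" using mS by (simp add: x_def)
          moreover have p0: "int p \<noteq> 0" using pr by simp
          ultimately have "x (Suc n) div int p = int p" by simp
          have "int p dvd x (Suc n)" using \<open>x (Suc n) = int p * int p\<close> by simp
          moreover have "int p dvd x n + x (Suc n) div int p"
            using \<open>x n = int p * N n\<close> \<open>x (Suc n) div int p = int p\<close> by simp
          ultimately show ?thesis using D xc mS by simp
        qed
        then show "mult p (max i j) (jnd p (max i j) i (res p (Suc n) i (cst (Suc n) (int p))))
             (jnd p (max i j) j (res p (Suc n) j (cst (Suc n) (int p)))) \<in> I (max i j)"
          using eqx m_def by simp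
      qed
      have P: "\<forall>k l' a b. l' \<le> k \<and> k \<le> l \<and> a \<in> carr k \<and> b \<in> carr l' \<and>
        (\<forall>i\<le>k. \<forall>j\<le>l'. mult p (max i j) (jnd p (max i j) i (res p k i a))
                                         (jnd p (max i j) j (res p l' j b)) \<in> I (max i j))
        \<longrightarrow> a \<in> I k \<or> b \<in> I l'" using I(3) unfolding omega_prime_def by (rule conjunct2)
      note Q = spec[OF spec[OF spec[OF spec[OF P, of "Suc n"], of "Suc n"], of "cst (Suc n) (int p)"], of "cst (Suc n) (int p)"]
      have "cst (Suc n) (int p) \<in> I (Suc n) \<or> cst (Suc n) (int p) \<in> I (Suc n)"
        apply (rule mp[OF Q])
        apply (intro conjI)
            apply (rule order_refl)
           apply (rule Suc.prems)
          apply (rule cst_carr)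
         apply (rule cst_carr)
        apply (rule H)
        done
      then show ?thesis by simp
    qed
    have sup: "S p (Suc n) \<subseteq> I (Suc n)"
    proof
      fix a assume a: "a \<in> S p (Suc n)"
      define c where "c = a (Suc n) div int p"
      have ac: "a (Suc n) = c * int p" using a unfolding c_def S_def by simp
      define d where "d = a n + c"
      define w where "w = (\<lambda>t. d * cst (Suc n) (int p) t)"
      have w: "w \<in> I (Suc n)" unfolding w_def using Ji cp by (rule smul_in)
      define x where "x = (\<lambda>t. a t - w t)"
      have xc: "x \<in> carr (Suc n)" using a by (simp add: x_def w_def S_def carr_def cst_def)
      have x1: "x (Suc n) = (c - d) * int p" by (simp add: x_def w_def cst_def ac algebra_simps)
      have x2: "x n = a n" by (simp add: x_def w_def cst_def)
      have "int p \<noteq> 0" using pr by simp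
      then have "x (Suc n) div int p = c - d" using x1 by simp
      then have "int p dvd x (Suc n)" "int p dvd x n + x (Suc n) div int p"
        using x1 x2 by (auto simp: d_def)
      then have "x \<in> I (Suc n)" using D xc by simp
      moreover have "a = (\<lambda>t. x t + w t)" by (simp add: x_def)
      ultimately show "a \<in> I (Suc n)" using add_in[OF Ji _ w] by simp
    qed
    have "I (Suc n) = S p (Suc n)" using sub sup by blast
    then show ?case using IH le_Suc_eq by auto
  qed
  then show ?thesis by blast
qed

theorem proposition6:
  fixes p r l :: nat
  assumes "prime p" and "l \<le> r"
  shows "omega_ideal p l (Lseq p) \<and> omega_prime p l (Lseq p)
    \<and> (\<forall>k. 1 \<le> k \<and> k \<le> l \<longrightarrow> Lseq p k = J0 p k (int p))
    \<and> (\<forall>I. omega_ideal p l I \<and> I 0 = pZ p \<and> omega_prime p l I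
           \<longrightarrow> (\<forall>k\<le>l. I k = Lseq p k))"
proof -
  have A1: "omega_ideal p l (Lseq p)" by (rule part1)
  have A2: "omega_prime p l (Lseq p)" using assms(1) by (rule part2)
  have A3: "\<forall>k. 1 \<le> k \<and> k \<le> l \<longrightarrow> Lseq p k = J0 p k (int p)"
  proof (intro allI impI)
    fix k assume "1 \<le> k \<and> k \<le> l"
    then have "1 \<le> k" by (rule conjunct1)
    then show "Lseq p k = J0 p k (int p)" by (rule part3)
  qed
  have A4: "\<forall>I. omega_ideal p l I \<and> I 0 = pZ p \<and> omega_prime p l I
           \<longrightarrow> (\<forall>k\<le>l. I k = Lseq p k)"
  proof (rule allI, rule impI)
    fix I assume H: "omega_ideal p l I \<and> I 0 = pZ p \<and> omega_prime p l I"
    have "\<forall>k\<le>l. I k = S p k"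
      using assms(1) conjunct1[OF H] conjunct1[OF conjunct2[OF H]] conjunct2[OF conjunct2[OF H]]
      by (rule part4)
    then show "\<forall>k\<le>l. I k = Lseq p k" by (simp only: Lseq_char)
  qed
  show ?thesis using A1 A2 A3 A4 by (intro conjI)
qed

end
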